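(* Let $r\ge1$, $n$ be integers and let $\sigma:\mathbb{Z}_n\to\{0,1\}$ be a temporally periodic configuration. Then either every block $[i,j]\in B(\sigma)$ has length $|[i,j]|\le r$, or every block $[i,j]\in B(\sigma)$ has length $|[i,j]|>r$.
   Context: Cells are elements of $\mathbb{Z}_n$, arithmetic mod $n$; $[a,b]$ denotes the cyclic interval $a,a+1,\dots,b$ and $|[a,b]|$ its number of cells. The majority rule with radius $r$: $\mathrm{maj}_r(\sigma)(i)=0$ if among the cells of $[i-r,i+r]$ strictly more have value $0$ than value $1$ under $\sigma$, and $=1$ otherwise. $\sigma$ is temporally periodic if $\mathrm{maj}_r(\mathrm{maj}_r(\sigma))=\sigma$. For $\beta\in\{0,1\}$, $B^\beta(\sigma)$ is the set of maximal homogeneous blocks with value $\beta$: cell intervals $[i,j]$ with $\sigma(k)=\beta$ for all $k\in[i,j]$ and $\sigma(i-1)=\sigma(j+1)=1-\beta$; $B(\sigma)=B^0(\sigma)\cup B^1(\sigma)$. *)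

theory Defs
  imports Main
begin

(* Cells are integers taken modulo n (representatives 0..n-1). A configuration
   sigma : Z_n -> {0,1} is a function int => bool, with False = 0, True = 1,
   always read at (x mod n). *)

definition cyc_interval :: "nat \<Rightarrow> int \<Rightarrow> int \<Rightarrow> int set" where
  "cyc_interval n a b = {(a + int t) mod int n | t. t \<le> nat ((b - a) mod int n)}"

definition maj :: "nat \<Rightarrow> nat \<Rightarrow> (int \<Rightarrow> bool) \<Rightarrow> int \<Rightarrow> bool" where
  "maj n r \<sigma> i =
     (\<not> (card {k \<in> {- int r .. int r}. \<not> \<sigma> ((i + k) mod int n)}
          > card {k \<in> {- int r .. int r}. \<sigma> ((i + k) mod int n)}))"

definition temporally_periodic :: "nat \<Rightarrow> nat \<Rightarrow> (int \<Rightarrow> bool) \<Rightarrow> bool" where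
  "temporally_periodic n r \<sigma> \<longleftrightarrow>
     (\<forall>i \<in> {0..<int n}. maj n r (maj n r \<sigma>) i = \<sigma> i)"

definition blocks_of :: "nat \<Rightarrow> (int \<Rightarrow> bool) \<Rightarrow> bool \<Rightarrow> (int \<times> int) set" where
  "blocks_of n \<sigma> \<beta> = {(i, j). i \<in> {0..<int n} \<and> j \<in> {0..<int n} \<and>
      (\<forall>k \<in> cyc_interval n i j. \<sigma> k = \<beta>) \<and>
      \<sigma> ((i - 1) mod int n) = (\<not> \<beta>) \<and> \<sigma> ((j + 1) mod int n) = (\<not> \<beta>)}"

definition blocks :: "nat \<Rightarrow> (int \<Rightarrow> bool) \<Rightarrow> (int \<times> int) set" where
  "blocks n \<sigma> = blocks_of n \<sigma> False \<union> blocks_of n \<sigma> True"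

end

theory Submission
  imports Defs
begin

lemma maj_count:
  fixes S :: "int set"
  assumes S: "S \<subseteq> {- int r .. int r}" and cS: "card S \<ge> r + 1"
    and v: "\<forall>k\<in>S. \<rho> ((x + k) mod int n) = \<beta>"
  shows "maj n r \<rho> x = \<beta>"
proof -
  let ?I = "{- int r .. int r}"
  let ?A = "{k \<in> ?I. \<not> \<rho> ((x + k) mod int n)}"
  let ?B = "{k \<in> ?I. \<rho> ((x + k) mod int n)}"
  have cI: "card ?I = 2 * r + 1" by simp
  have un: "?A \<union> ?B = ?I" by blast
  have dj: "?A \<inter> ?B = {}" by blast
  have "card (?A \<union> ?B) = card ?A + card ?B"
    by (rule card_Un_disjoint) (auto intro: finite_subset[of _ ?I])
  then have "card ?A + card ?B = 2 * r + 1"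
    using un cI by simp
  show ?thesis
  proof (cases \<beta>)
    case True
    then have "S \<subseteq> ?B" using S v by auto
    then have "card S \<le> card ?B" by (intro card_mono) (auto intro: finite_subset[of _ ?I])
    then show ?thesis unfolding maj_def using True \<open>card ?A + card ?B = 2 * r + 1\<close> cS by linarith
  next
    case False
    then have "S \<subseteq> ?A" using S v by auto
    then have "card S \<le> card ?A" by (intro card_mono) (auto intro: finite_subset[of _ ?I])
    then show ?thesis unfolding maj_def using False \<open>card ?A + card ?B = 2 * r + 1\<close> cS by linarith
  qed
qed

lemma maj_mod: "maj n r \<rho> (x mod int n) = maj n r \<rho> x"
  unfolding maj_def by (simp add: mod_add_left_eq)

definition longc :: "nat \<Rightarrow> nat \<Rightarrow> (int \<Rightarrow> bool) \<Rightarrow> int \<Rightarrow> bool" where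
  "longc n r \<sigma> x = (\<exists>c. - int r \<le> c \<and> c \<le> 0 \<and>
     (\<forall>k. c \<le> k \<and> k \<le> c + int r \<longrightarrow> \<sigma> ((x + k) mod int n) = \<sigma> (x mod int n)))"

lemma longc_mod: "longc n r \<sigma> (x mod int n) = longc n r \<sigma> x"
  unfolding longc_def by (simp add: mod_add_left_eq)

lemma longc_step:
  assumes tp: "temporally_periodic n r \<sigma>" and r1: "r \<ge> 1" and n1: "n \<ge> 1"
    and L: "longc n r \<sigma> x"
  shows "longc n r \<sigma> (x + 1)"
proof -
  define \<beta> where "\<beta> = \<sigma> (x mod int n)"
  obtain c where c1: "- int r \<le> c" and c2: "c \<le> 0"
    and cw: "\<And>k. c \<le> k \<Longrightarrow> k \<le> c + int r \<Longrightarrow> \<sigma> ((x + k) mod int n) = \<beta>"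
    using L unfolding longc_def \<beta>_def by blast
  show ?thesis
  proof (cases "\<sigma> ((x + 1) mod int n) = \<beta>")
    case True
    show ?thesis
    proof (cases "c = - int r")
      case True
      show ?thesis unfolding longc_def
      proof (intro exI[of _ "- int r"] conjI allI impI)
        fix k assume k: "- int r \<le> k \<and> k \<le> - int r + int r"
        show "\<sigma> ((x + 1 + k) mod int n) = \<sigma> ((x + 1) mod int n)"
        proof (cases "k = 0")
          case True then show ?thesis by simp
        next
          case False
          then have "\<sigma> ((x + (k + 1)) mod int n) = \<beta>" using cw[of "k+1"] k \<open>c = - int r\<close> by simp
          then show ?thesis using \<open>\<sigma> ((x + 1) mod int n) = \<beta>\<close> by (simp add: algebra_simps)
        qed
      qed simp_all
    next
      case False
      show ?thesis unfolding longc_def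
      proof (intro exI[of _ "c - 1"] conjI allI impI)
        show "- int r \<le> c - 1" using False c1 by simp
        show "c - 1 \<le> 0" using c2 by simp
        fix k assume k: "c - 1 \<le> k \<and> k \<le> c - 1 + int r"
        have "\<sigma> ((x + (k + 1)) mod int n) = \<beta>" using cw[of "k+1"] k by simp
        then show "\<sigma> ((x + 1 + k) mod int n) = \<sigma> ((x + 1) mod int n)"
          using \<open>\<sigma> ((x + 1) mod int n) = \<beta>\<close> by (simp add: algebra_simps)
      qed
    qed
  next
    case False
    have cr: "c = - int r"
    proof (rule ccontr)
      assume "c \<noteq> - int r"
      then have "\<sigma> ((x + 1) mod int n) = \<beta>" using cw[of 1] c1 c2 by simp
      then show False using False by simp
    qed
    have wl: "\<And>k. - int r \<le> k \<Longrightarrow> k \<le> 0 \<Longrightarrow> \<sigma> ((x + k) mod int n) = \<beta>"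
      using cw cr by simp
    show ?thesis unfolding longc_def
    proof (intro exI[of _ 0] conjI allI impI)
      fix k assume k: "0 \<le> k \<and> k \<le> 0 + int r"
      show "\<sigma> ((x + 1 + k) mod int n) = \<sigma> ((x + 1) mod int n)"
      proof (rule ccontr)
        assume ne: "\<sigma> ((x + 1 + k) mod int n) \<noteq> \<sigma> ((x + 1) mod int n)"
        define m where "m = k"
        have mb: "\<sigma> ((x + 1 + m) mod int n) = \<beta>" using ne False m_def by auto
        have m0: "m \<noteq> 0" using ne m_def by auto
        have m1: "1 \<le> m" "m \<le> int r" using m0 k m_def by auto
        define \<tau> where "\<tau> = maj n r \<sigma>"
        have t0: "\<tau> (x + 1) = \<beta>"
          unfolding \<tau>_def
        proof (rule maj_count[of "{- int r .. -1} \<union> {m}"])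
          show "{- int r..- 1} \<union> {m} \<subseteq> {- int r..int r}" using m1 by auto
          have "card ({- int r..- 1} \<union> {m}) = card {- int r..- 1} + card {m}"
            by (rule card_Un_disjoint) (use m1 in auto)
          then show "r + 1 \<le> card ({- int r..- 1} \<union> {m})" by simp
          show "\<forall>k\<in>{- int r..- 1} \<union> {m}. \<sigma> ((x + 1 + k) mod int n) = \<beta>"
          proof
            fix k assume "k \<in> {- int r..- 1} \<union> {m}"
            then show "\<sigma> ((x + 1 + k) mod int n) = \<beta>"
            proof
              assume "k \<in> {- int r..- 1}"
              then have "\<sigma> ((x + (k + 1)) mod int n) = \<beta>" using wl[of "k+1"] by auto
              then show ?thesis by (simp add: algebra_simps)
            next
              assume "k \<in> {m}" then show ?thesis using mb by simp
            qed
          qed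
        qed
        have tj: "\<tau> (x + 1 - j) = \<beta>" if j: "1 \<le> j" "j \<le> int r" for j
          unfolding \<tau>_def
        proof (rule maj_count[of "{j - 1 - int r .. j - 1}"])
          show "{j - 1 - int r..j - 1} \<subseteq> {- int r..int r}" using j by auto
          show "r + 1 \<le> card {j - 1 - int r..j - 1}" by simp
          show "\<forall>k\<in>{j - 1 - int r..j - 1}. \<sigma> ((x + 1 - j + k) mod int n) = \<beta>"
          proof
            fix k assume "k \<in> {j - 1 - int r..j - 1}"
            then have "\<sigma> ((x + (k + 1 - j)) mod int n) = \<beta>" using wl[of "k+1-j"] by auto
            then show "\<sigma> ((x + 1 - j + k) mod int n) = \<beta>" by (simp add: algebra_simps)
          qed
        qed
        have "maj n r \<tau> (x + 1) = \<beta>"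
        proof (rule maj_count[of "{- int r .. 0}"])
          show "{- int r..0} \<subseteq> {- int r..int r}" by auto
          show "r + 1 \<le> card {- int r..0}" by simp
          show "\<forall>k\<in>{- int r..0}. \<tau> ((x + 1 + k) mod int n) = \<beta>"
          proof
            fix k assume k: "k \<in> {- int r..0}"
            have "\<tau> ((x + 1 + k) mod int n) = \<tau> (x + 1 + k)"
              unfolding \<tau>_def by (rule maj_mod)
            also have "\<dots> = \<beta>"
            proof (cases "k = 0")
              case True then show ?thesis using t0 by simp
            next
              case False
              then show ?thesis using tj[of "-k"] k by auto
            qed
            finally show "\<tau> ((x + 1 + k) mod int n) = \<beta>" .
          qed
        qed
        moreover have "maj n r \<tau> ((x + 1) mod int n) = \<sigma> ((x + 1) mod int n)"
          using tp n1 unfolding temporally_periodic_def \<tau>_def by auto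
        ultimately show False using False maj_mod[of n r \<tau> "x+1"] by simp
      qed
    qed simp_all
  qed
qed

lemma longc_plus:
  assumes tp: "temporally_periodic n r \<sigma>" and r1: "r \<ge> 1" and n1: "n \<ge> 1"
    and L: "longc n r \<sigma> x"
  shows "longc n r \<sigma> (x + int t)"
proof (induction t)
  case 0 then show ?case using L by simp
next
  case (Suc t)
  then have "longc n r \<sigma> (x + int t + 1)" using longc_step[OF tp r1 n1] by blast
  then show ?case by (simp add: algebra_simps)
qed

lemma cyc_mem: "t \<le> nat ((b - a) mod int n) \<Longrightarrow> (a + int t) mod int n \<in> cyc_interval n a b"
  unfolding cyc_interval_def by blast

lemma cyc_card:
  assumes n1: "n \<ge> 1"
  shows "card (cyc_interval n a b) = nat ((b - a) mod int n) + 1"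
proof -
  let ?M = "nat ((b - a) mod int n)"
  have M: "?M < n" using n1 by (simp add: nat_less_iff)
  have eq: "cyc_interval n a b = (\<lambda>t. (a + int t) mod int n) ` {..?M}"
    unfolding cyc_interval_def by auto
  have "inj_on (\<lambda>t. (a + int t) mod int n) {..?M}"
  proof (rule inj_onI)
    fix t1 t2 assume t1: "t1 \<in> {..?M}" and t2: "t2 \<in> {..?M}"
      and e: "(a + int t1) mod int n = (a + int t2) mod int n"
    have "int t1 mod int n = int t2 mod int n"
      using e by (metis add_diff_cancel_left' mod_diff_cong)
    moreover have "t1 < n" "t2 < n" using t1 t2 M by auto
    ultimately show "t1 = t2" by (metis mod_less of_nat_mod of_nat_eq_iff)
  qed
  then show ?thesis using eq by (simp add: card_image)
qed

theorem claim6: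
  fixes n r :: nat and \<sigma> :: "int \<Rightarrow> bool"
  assumes "r \<ge> 1" and "n \<ge> 1"
    and "temporally_periodic n r \<sigma>"
  shows "(\<forall>(i, j) \<in> blocks n \<sigma>. card (cyc_interval n i j) \<le> r)
       \<or> (\<forall>(i, j) \<in> blocks n \<sigma>. card (cyc_interval n i j) > r)"
proof (rule ccontr)
  assume "\<not> ?thesis"
  then obtain i j i' j' where b1: "(i, j) \<in> blocks n \<sigma>" and c1: "card (cyc_interval n i j) > r"
    and b2: "(i', j') \<in> blocks n \<sigma>" and c2: "card (cyc_interval n i' j') \<le> r"
    by fastforce
  obtain \<beta> where i0: "i \<in> {0..<int n}" and j0: "j \<in> {0..<int n}"
      and allb: "\<forall>k \<in> cyc_interval n i j. \<sigma> k = \<beta>"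
    using b1 unfolding blocks_def blocks_of_def by blast
  obtain \<beta>' where i0': "i' \<in> {0..<int n}" and j0': "j' \<in> {0..<int n}"
      and allb': "\<forall>k \<in> cyc_interval n i' j'. \<sigma> k = \<beta>'"
      and l': "\<sigma> ((i' - 1) mod int n) = (\<not> \<beta>')"
      and r': "\<sigma> ((j' + 1) mod int n) = (\<not> \<beta>')"
    using b2 unfolding blocks_def blocks_of_def by blast
  define M where "M = nat ((j - i) mod int n)"
  define M' where "M' = nat ((j' - i') mod int n)"
  have "M + 1 > r" using c1 cyc_card[OF assms(2)] M_def by simp
  have "M' + 1 \<le> r" using c2 cyc_card[OF assms(2)] M'_def by simp
  have im: "i mod int n = i" using i0 by simp
  have im': "i' mod int n = i'" using i0' by simp
  have "longc n r \<sigma> i"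
    unfolding longc_def
  proof (intro exI[of _ 0] conjI allI impI)
    fix k assume k: "0 \<le> k \<and> k \<le> 0 + int r"
    have "(i + int (nat k)) mod int n \<in> cyc_interval n i j"
      by (rule cyc_mem) (use k \<open>M + 1 > r\<close> M_def in auto)
    then have "\<sigma> ((i + k) mod int n) = \<beta>" using allb k by simp
    moreover have "i mod int n \<in> cyc_interval n i j" using cyc_mem[of 0 j i n] by simp
    ultimately show "\<sigma> ((i + k) mod int n) = \<sigma> (i mod int n)" using allb by simp
  qed simp_all
  then have "longc n r \<sigma> (i + int (nat ((i' - i) mod int n)))"
    using longc_plus[OF assms(3) assms(1) assms(2)] by blast
  moreover have "(i + int (nat ((i' - i) mod int n))) mod int n = i'"
    using assms(2) im' by (simp add: mod_add_right_eq)
  ultimately have "longc n r \<sigma> i'" using longc_mod by metis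
  then obtain c where cc1: "- int r \<le> c" and cc2: "c \<le> 0"
    and cw: "\<And>k. c \<le> k \<Longrightarrow> k \<le> c + int r \<Longrightarrow> \<sigma> ((i' + k) mod int n) = \<sigma> i'"
    unfolding longc_def using im' by auto
  have "\<sigma> i' = \<beta>'" using allb' cyc_mem[of 0 j' i' n] im' by simp
  have "c = 0"
  proof (rule ccontr)
    assume "c \<noteq> 0"
    then have "\<sigma> ((i' + -1) mod int n) = \<sigma> i'" using cw[of "-1"] cc1 cc2 assms(1) by simp
    then show False using l' \<open>\<sigma> i' = \<beta>'\<close> by simp
  qed
  then have "\<sigma> ((i' + int (M' + 1)) mod int n) = \<beta>'"
    using cw[of "int (M' + 1)"] \<open>M' + 1 \<le> r\<close> \<open>\<sigma> i' = \<beta>'\<close> by simp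
  moreover have "(i' + int (M' + 1)) mod int n = (j' + 1) mod int n"
  proof -
    have "i' + int (M' + 1) = (i' + (j' - i') mod int n) + 1" using M'_def assms(2) by simp
    then show ?thesis by (metis add.commute diff_add_cancel mod_add_left_eq mod_add_right_eq)
  qed
  ultimately show False using r' by simp
qed

end
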